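(* Consider a bipartite instance of Stochastic Matching, and let $x$ be an optimal solution of (LP-BIP), with optimal value $LP_{bip}$. Fix $\delta\in(0,1)$ and define $\gamma\in[0,1]$ by $\gamma\, LP_{bip}=\sum_{e:\,p_e\ge\delta}w_ep_ex_e$. Run algorithm ALG$_1$ on this instance. Then its expected matching weight is at least $\bigl(\tfrac13\gamma+g(\delta)(1-\gamma)\bigr)LP_{bip}$.
   Context: Stochastic Matching instance: a graph $G=(V,E)$, edge probabilities $p_e\in(0,1]$, edge weights $w_e\ge0$, and vertex timeouts $t_v\in\mathbb{Z}_{>0}$. Edges are probed adaptively, each at most once. A probed edge exists independently with probability $p_e$ and is then irrevocably added to the matching. Only edges with both endpoints unmatched may be probed, and at most $t_v$ edges incident to $v$ may be probed. (LP-BIP) is the linear program: maximize $\sum_e w_ep_ex_e$ subject to - $\sum_{e\in\delta(v)}p_ex_e\le1$ for all $v$; - $\sum_{e\in\delta(v)}x_e\le t_v$ for all $v$; - $0\le x_e\le1$ for all $e$. Here $\delta(v)$ is the set of edges incident to $v$, and $\delta(e)$ is the set of edges other than $e$ sharing an endpoint with $e$. The function $g$ is $g(p)=\frac{1}{2+p}\bigl(1-\exp(-\frac{2+p}{p}\ln\frac1{1-p})\bigr)$ for $p\in(0,1)$, with $g(1)=\frac13$. ALG$_1$ proceeds as follows: 1. Take an optimal solution $x$ of (LP-BIP). 2. Produce a random edge set $\hat E$ by the dependent rounding of Gandhi et al. (GKPS). Writing $\hat x_e=\mathbf1[e\in\hat E]$, this rounding satisfies: - $\Pr[\hat x_e=1]=x_e$;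 - $\sum_{e\in\delta(v)}\hat x_e\le\lceil\sum_{e\in\delta(v)}x_e\rceil$ for all $v$; - negative correlation: for every $v$, every $S\subseteq\delta(v)$ and every $b\in\{0,1\}$, $\Pr[\bigwedge_{e\in S}\hat x_e=b]\le\prod_{e\in S}\Pr[\hat x_e=b]$. 3. Independently draw $Y_e$ with $\Pr[Y_e\le y]=\frac{1}{p_e}(1-e^{-p_ey})$ for $y\in[0,\frac1{p_e}\ln\frac1{1-p_e}]$. 4. Consider the edges of $\hat E$ in increasing order of $Y_e$, and probe $e$ if no edge of $\delta(e)\cap\hat E$ has already been added to the matching. *)

theory Defs
  imports "HOL-Probability.Probability"
begin

text \<open>Bipartite instance: left vertices of type 'a, right vertices of type 'b,
  an edge is a pair (u,v) with u on the left and v on the right.\<close>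

definition deltaL :: "('a \<times> 'b) set \<Rightarrow> 'a \<Rightarrow> ('a \<times> 'b) set" where
  "deltaL E u = {e \<in> E. fst e = u}"

definition deltaR :: "('a \<times> 'b) set \<Rightarrow> 'b \<Rightarrow> ('a \<times> 'b) set" where
  "deltaR E v = {e \<in> E. snd e = v}"

definition adj :: "('a \<times> 'b) \<Rightarrow> ('a \<times> 'b) \<Rightarrow> bool" where
  "adj e f = (e \<noteq> f \<and> (fst e = fst f \<or> snd e = snd f))"

definition lp_feasible ::
  "('a \<times> 'b) set \<Rightarrow> ('a \<times> 'b \<Rightarrow> real) \<Rightarrow> ('a \<Rightarrow> nat) \<Rightarrow> ('b \<Rightarrow> nat) \<Rightarrow> ('a \<times> 'b \<Rightarrow> real) \<Rightarrow> bool" where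
  "lp_feasible E p tL tR x =
     ((\<forall>u. (\<Sum>e\<in>deltaL E u. p e * x e) \<le> 1) \<and>
      (\<forall>v. (\<Sum>e\<in>deltaR E v. p e * x e) \<le> 1) \<and>
      (\<forall>u. (\<Sum>e\<in>deltaL E u. x e) \<le> real (tL u)) \<and>
      (\<forall>v. (\<Sum>e\<in>deltaR E v. x e) \<le> real (tR v)) \<and>
      (\<forall>e\<in>E. 0 \<le> x e \<and> x e \<le> 1))"

definition lp_obj :: "('a \<times> 'b) set \<Rightarrow> ('a \<times> 'b \<Rightarrow> real) \<Rightarrow> ('a \<times> 'b \<Rightarrow> real) \<Rightarrow> ('a \<times> 'b \<Rightarrow> real) \<Rightarrow> real" where
  "lp_obj E p w x = (\<Sum>e\<in>E. w e * p e * x e)"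

definition lp_optimal ::
  "('a \<times> 'b) set \<Rightarrow> ('a \<times> 'b \<Rightarrow> real) \<Rightarrow> ('a \<times> 'b \<Rightarrow> real) \<Rightarrow> ('a \<Rightarrow> nat) \<Rightarrow> ('b \<Rightarrow> nat) \<Rightarrow> ('a \<times> 'b \<Rightarrow> real) \<Rightarrow> bool" where
  "lp_optimal E p w tL tR x =
     (lp_feasible E p tL tR x \<and>
      (\<forall>x'. lp_feasible E p tL tR x' \<longrightarrow> lp_obj E p w x' \<le> lp_obj E p w x))"

text \<open>Properties of the GKPS dependent rounding, as a distribution D over edge sets.\<close>
definition gkps_rounding ::
  "('a \<times> 'b) set \<Rightarrow> ('a \<times> 'b \<Rightarrow> real) \<Rightarrow> ('a \<times> 'b) set pmf \<Rightarrow> bool" where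
  "gkps_rounding E x D =
     ((\<forall>H\<in>set_pmf D. H \<subseteq> E) \<and>
      (\<forall>e\<in>E. measure_pmf.prob D {H. e \<in> H} = x e) \<and>
      (\<forall>H\<in>set_pmf D. \<forall>u. real (card (deltaL H u)) \<le> of_int \<lceil>\<Sum>e\<in>deltaL E u. x e\<rceil>) \<and>
      (\<forall>H\<in>set_pmf D. \<forall>v. real (card (deltaR H v)) \<le> of_int \<lceil>\<Sum>e\<in>deltaR E v. x e\<rceil>) \<and>
      (\<forall>u S b. S \<subseteq> deltaL E u \<longrightarrow>
         measure_pmf.prob D {H. \<forall>e\<in>S. (e \<in> H) = b} \<le> (\<Prod>e\<in>S. measure_pmf.prob D {H. (e \<in> H) = b})) \<and>
      (\<forall>v S b. S \<subseteq> deltaR E v \<longrightarrow>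
         measure_pmf.prob D {H. \<forall>e\<in>S. (e \<in> H) = b} \<le> (\<Prod>e\<in>S. measure_pmf.prob D {H. (e \<in> H) = b})))"

text \<open>Distribution of Y_e: CDF (1/q)(1 - exp(-q y)) on [0, (1/q) ln (1/(1-q))],
  i.e. density exp(-q y) there (for q = 1 the interval is [0,\<infinity>)).\<close>
definition Ydist :: "real \<Rightarrow> real measure" where
  "Ydist q = density lborel
     (\<lambda>y. ennreal (if 0 \<le> y \<and> (q = 1 \<or> y \<le> ln (1 / (1 - q)) / q) then exp (- q * y) else 0))"

fun greedy_probe :: "('a \<times> 'b \<Rightarrow> bool) \<Rightarrow> ('a \<times> 'b) list \<Rightarrow> ('a \<times> 'b) set \<Rightarrow> ('a \<times> 'b) set" where
  "greedy_probe X [] M = M"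
| "greedy_probe X (e # es) M =
     greedy_probe X es (if (\<exists>f\<in>M. adj e f) then M else if X e then insert e M else M)"

text \<open>Matching produced by ALG1 given the rounded set H, the keys Y and existence outcomes X:
  edges of H in increasing order of Y (ties, a null event, broken arbitrarily).\<close>
definition alg1_matching ::
  "('a \<times> 'b) set \<Rightarrow> ('a \<times> 'b \<Rightarrow> real) \<Rightarrow> ('a \<times> 'b \<Rightarrow> bool) \<Rightarrow> ('a \<times> 'b) set" where
  "alg1_matching H Y X = greedy_probe X (sort_key Y (SOME es. distinct es \<and> set es = H)) {}"

definition alg1_value ::
  "('a \<times> 'b) set \<Rightarrow> ('a \<times> 'b \<Rightarrow> real) \<Rightarrow> ('a \<times> 'b \<Rightarrow> real) \<Rightarrow> ('a \<times> 'b) set pmf \<Rightarrow> real" where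
  "alg1_value E p w D =
     measure_pmf.expectation D (\<lambda>H.
       \<integral>Y. measure_pmf.expectation (Pi_pmf E False (\<lambda>e. bernoulli_pmf (p e)))
              (\<lambda>X. \<Sum>e\<in>alg1_matching H Y X. w e)
         \<partial>(PiM E (\<lambda>e. Ydist (p e))))"

definition g :: "real \<Rightarrow> real" where
  "g q = (if q = 1 then 1/3
          else 1 / (2 + q) * (1 - exp (- ((2 + q) / q) * ln (1 / (1 - q)))))"

end

theory Submission
  imports Defs
begin

lemma exp_has_integral:
  fixes c b :: real
  assumes "0 < c" "0 \<le> b"
  shows "((\<lambda>y. exp (- c * y)) has_integral (1 - exp (- c * b)) / c) {0..b}"
proof -
  have "((\<lambda>y. exp (- c * y)) has_integral ((- exp (- c * b) / c) - (- exp (- c * 0) / c))) {0..b}"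
  proof (rule fundamental_theorem_of_calculus)
    show "0 \<le> b" by fact
    fix x :: real assume "x \<in> {0..b}"
    show "((\<lambda>y. - exp (- c * y) / c) has_vector_derivative exp (- c * x)) (at x within {0..b})"
      using assms(1)
      by (auto intro!: derivative_eq_intros simp: has_real_derivative_iff_has_vector_derivative[symmetric])
  qed
  then show ?thesis by (simp add: diff_divide_distrib)
qed

lemma exp_nn_integral:
  fixes c b :: real
  assumes "0 < c" "0 \<le> b"
  shows "(\<integral>\<^sup>+ y. ennreal (indicator {0..b} y * exp (- c * y)) \<partial>lborel) = ennreal ((1 - exp (- c * b)) / c)"
  using nn_integral_has_integral_lebesgue[OF _ exp_has_integral[OF assms]] by simp

lemma exp_nn_integral_inf:
  fixes c :: real
  assumes "0 < c"
  shows "(\<integral>\<^sup>+ y. ennreal (indicator {0..} y * exp (- c * y)) \<partial>lborel) = ennreal (1 / c)"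
proof -
  interpret prob_space "density lborel (exponential_density c)"
    using prob_space_exponential_density[OF assms] .
  have "(\<integral>\<^sup>+ y. ennreal (exponential_density c y) \<partial>lborel) = 1"
    using emeasure_space_1 by (simp add: emeasure_density)
  moreover have "(\<lambda>y. ennreal (exponential_density c y)) = (\<lambda>y. ennreal c * ennreal (indicator {0..} y * exp (- c * y)))"
    using assms by (auto simp: exponential_density_def fun_eq_iff indicator_def mult.commute ennreal_mult[symmetric])
  ultimately have "ennreal c * (\<integral>\<^sup>+ y. ennreal (indicator {0..} y * exp (- c * y)) \<partial>lborel) = 1"
    by (simp add: nn_integral_cmult)
  moreover have "ennreal (1 / c) * ennreal c = 1" using assms
    by (simp add: ennreal_mult[symmetric])
  ultimately show ?thesis
    by (metis mult.assoc mult_1 mult.right_neutral)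
qed

definition Aset :: "real \<Rightarrow> real set" where
  "Aset q = (if q = 1 then {0..} else {0..ln (1 / (1 - q)) / q})"

lemma Ydist_alt: "Ydist q = density lborel (\<lambda>y. ennreal (indicator (Aset q) y * exp (- q * y)))"
  unfolding Ydist_def Aset_def
  by (rule arg_cong[where f="density lborel"]) (auto simp: fun_eq_iff indicator_def)

lemma Ydist_total:
  assumes "0 < q" "q \<le> 1"
  shows "(\<integral>\<^sup>+ y. ennreal (indicator (Aset q) y * exp (- q * y)) \<partial>lborel) = 1"
proof (cases "q = 1")
  case True
  then show ?thesis using exp_nn_integral_inf[of 1] by (simp add: Aset_def)
next
  case False
  then have q1: "q < 1" using assms by auto
  have a: "0 \<le> ln (1 / (1 - q)) / q" using assms q1 by (auto intro!: divide_nonneg_pos)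
  have "exp (- q * (ln (1 / (1 - q)) / q)) = 1 - q"
    using assms q1 by (simp add: ln_div)
  then show ?thesis using exp_nn_integral[OF assms(1) a] False assms by (simp add: Aset_def)
qed

lemma Aset_sets[measurable]: "Aset q \<in> sets borel"
  by (simp add: Aset_def)

lemma dens_meas[measurable]: "(\<lambda>y. ennreal (indicator (Aset q) y * exp (- q * y))) \<in> borel_measurable borel"
  by measurable

lemma prob_space_Ydist:
  assumes "0 < q" "q \<le> 1"
  shows "prob_space (Ydist q)"
proof (rule prob_spaceI)
  have "emeasure (Ydist q) (space (Ydist q)) = (\<integral>\<^sup>+ y. ennreal (indicator (Aset q) y * exp (- q * y)) * indicator UNIV y \<partial>lborel)"
    unfolding Ydist_alt by (subst emeasure_density) auto
  also have "\<dots> = 1" using Ydist_total[OF assms] by simp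
  finally show "emeasure (Ydist q) (space (Ydist q)) = 1" .
qed

lemma Aset_nonneg: "y \<in> Aset q \<Longrightarrow> 0 \<le> y"
  by (auto simp: Aset_def split: if_splits)

lemma Ydist_cdf:
  assumes "0 < q" "q \<le> 1" "0 \<le> y"
  shows "emeasure (Ydist q) {..y} \<le> ennreal ((1 - exp (- q * y)) / q)"
proof -
  have "emeasure (Ydist q) {..y} = (\<integral>\<^sup>+ s. ennreal (indicator (Aset q) s * exp (- q * s)) * indicator {..y} s \<partial>lborel)"
    unfolding Ydist_alt by (subst emeasure_density) auto
  also have "\<dots> \<le> (\<integral>\<^sup>+ s. ennreal (indicator {0..y} s * exp (- q * s)) \<partial>lborel)"
    by (intro nn_integral_mono) (auto simp: indicator_def dest: Aset_nonneg)
  also have "\<dots> = ennreal ((1 - exp (- q * y)) / q)"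
    by (rule exp_nn_integral[OF assms(1,3)])
  finally show ?thesis .
qed

lemma Ydist_g:
  assumes "0 < q" "q \<le> 1"
  shows "(\<integral>\<^sup>+ y. ennreal (indicator (Aset q) y * exp (- q * y)) * ennreal (exp (- 2 * y)) \<partial>lborel) = ennreal (g q)"
proof -
  have eq: "(\<lambda>y. ennreal (indicator (Aset q) y * exp (- q * y)) * ennreal (exp (- 2 * y)))
       = (\<lambda>y. ennreal (indicator (Aset q) y * exp (- (2 + q) * y)))"
    by (auto simp: fun_eq_iff ennreal_mult[symmetric] indicator_def mult_exp_exp algebra_simps)
  show ?thesis
    unfolding eq
  proof (cases "q = 1")
    case True
    then show "(\<integral>\<^sup>+ y. ennreal (indicator (Aset q) y * exp (- (2 + q) * y)) \<partial>lborel) = ennreal (g q)"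
      using exp_nn_integral_inf[of 3] by (simp add: Aset_def g_def)
  next
    case False
    then have q1: "q < 1" using assms by auto
    have a: "0 \<le> ln (1 / (1 - q)) / q" using assms q1 by (auto intro!: divide_nonneg_pos)
    have c: "0 < 2 + q" using assms by simp
    have X: "(\<integral>\<^sup>+ y. ennreal (indicator {0..ln (1 / (1 - q)) / q} y * exp (- (2 + q) * y)) \<partial>lborel)
        = ennreal ((1 - exp (- (2 + q) * (ln (1 / (1 - q)) / q))) / (2 + q))"
      by (rule exp_nn_integral[OF c a])
    have As: "Aset q = {0..ln (1 / (1 - q)) / q}" using False by (simp add: Aset_def)
    have gq: "g q = 1 / (2 + q) * (1 - exp (- ((2 + q) / q) * ln (1 / (1 - q))))"
      using False by (simp add: g_def)
    have eqx: "- (2 + q) * (ln (1 / (1 - q)) / q) = - ((2 + q) / q) * ln (1 / (1 - q))"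
      using assms by (simp add: field_simps)
    have "(1 - exp (- (2 + q) * (ln (1 / (1 - q)) / q))) / (2 + q) = g q"
      unfolding gq eqx by simp
    then show "(\<integral>\<^sup>+ y. ennreal (indicator (Aset q) y * exp (- (2 + q) * y)) \<partial>lborel) = ennreal (g q)"
      using X unfolding As by simp
  qed
qed

lemma ln_ineq:
  fixes p q s :: real
  assumes "0 < p" "p \<le> q" "0 \<le> s" "0 < 1 - q * s"
  shows "ln (1 - q * s) / q \<le> ln (1 - p * s) / p"
proof -
  have q: "0 < q" using assms by simp
  define u where "u = p / q"
  have u: "0 \<le> u" "u \<le> 1" using assms q by (auto simp: u_def)
  have eq: "u *\<^sub>R (1 - q * s) + (1 - u) *\<^sub>R 1 = 1 - p * s"
    using q by (simp add: u_def field_simps)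
  have "(1 - u) * ln 1 + u * ln (1 - q * s) \<le> ln ((1 - u) *\<^sub>R 1 + u *\<^sub>R (1 - q * s))"
    by (rule concave_onD[OF ln_concave]) (use u assms(4) in auto)
  moreover have "(1 - u) *\<^sub>R 1 + u *\<^sub>R (1 - q * s) = 1 - p * s"
    using q by (simp add: u_def field_simps)
  ultimately have "(1 - u) * ln 1 + u * ln (1 - q * s) \<le> ln (1 - p * s)" by (simp only:)
  then have "u * ln (1 - q * s) \<le> ln (1 - p * s)" by simp
  then have "p * (ln (1 - q * s) / q) \<le> ln (1 - p * s)" using q by (simp add: u_def field_simps)
  then show ?thesis using assms(1) by (simp add: field_simps)
qed

lemma powr_ineq:
  fixes p q s :: real
  assumes "0 < p" "p \<le> q" "q \<le> 1" "0 \<le> s" "s \<le> 1"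
  shows "(1 - q * s) powr (2 / q) \<le> (1 - p * s) powr (2 / p)"
proof (cases "1 - q * s = 0")
  case True then show ?thesis by simp
next
  case False
  have qs: "q * s \<le> 1" using assms by (simp add: mult_le_one)
  then have pos: "0 < 1 - q * s" using False by simp
  have ps: "p * s \<le> q * s" using assms by (simp add: mult_right_mono)
  then have pos2: "0 < 1 - p * s" using pos by simp
  have "2 / q * ln (1 - q * s) \<le> 2 / p * ln (1 - p * s)"
    using ln_ineq[OF assms(1,2,4) pos] by (simp add: field_simps)
  then show ?thesis using pos pos2 by (simp add: powr_def)
qed

lemma g_has_integral:
  fixes p :: real
  assumes "0 < p" "p \<le> 1"
  shows "((\<lambda>s. (1 - p * s) powr (2 / p)) has_integral g p) {0..1}"
proof (cases "p = 1")
  case True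
  let ?F = "\<lambda>s::real. - ((1 - s) ^ 3) / 3"
  have "((\<lambda>s. (1 - s) ^ 2) has_integral (?F 1 - ?F 0)) {0..1::real}"
  proof (rule fundamental_theorem_of_calculus)
    fix x :: real assume "x \<in> {0..1}"
    show "(?F has_vector_derivative (1 - x) ^ 2) (at x within {0..1})"
      by (auto intro!: derivative_eq_intros simp: has_real_derivative_iff_has_vector_derivative[symmetric]
          power2_eq_square)
  qed simp
  then have "((\<lambda>s. (1 - s) ^ 2) has_integral 1/3) {0..1::real}" by simp
  moreover have "\<And>s. s \<in> {0..1::real} \<Longrightarrow> (1 - s) ^ 2 = (1 - 1 * s) powr (2 / 1)"
    by (simp add: powr_numeral)
  ultimately have "((\<lambda>s. (1 - 1 * s) powr (2 / 1)) has_integral 1/3) {0..1::real}"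
    using has_integral_cong[of "{0..1::real}" "\<lambda>s. (1 - s) ^ 2" "\<lambda>s. (1 - 1 * s) powr (2 / 1)"] by simp
  then show ?thesis using True by (simp add: g_def)
next
  case False
  then have p1: "p < 1" using assms by simp
  let ?G = "\<lambda>s. - ((1 - p * s) powr ((2 + p) / p)) / (2 + p)"
  have "((\<lambda>s. (1 - p * s) powr (2 / p)) has_integral (?G 1 - ?G 0)) {0..1}"
  proof (rule fundamental_theorem_of_calculus)
    fix x :: real assume x: "x \<in> {0..1}"
    have "p * x \<le> p" using x assms by (intro mult_left_le) auto
    then have pos: "0 < 1 - p * x" using p1 by linarith
    have "(?G has_real_derivative
            - (((2 + p) / p) * (1 - p * x) powr ((2 + p) / p - 1) * (- p)) / (2 + p)) (at x within {0..1})"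
      using pos by (auto intro!: derivative_eq_intros)
    moreover have "- (((2 + p) / p) * (1 - p * x) powr ((2 + p) / p - 1) * (- p)) / (2 + p)
        = (1 - p * x) powr (2 / p)"
    proof -
      have e: "(2 + p) / p - 1 = 2 / p" using assms by (simp add: field_simps)
      have nz: "p * p + p * 2 \<noteq> 0" using assms by (smt (verit) mult_pos_pos)
      have "\<And>A::real. - (((2 + p) / p) * A * (- p)) / (2 + p) = A" using assms nz by (simp add: field_simps)
      then show ?thesis by (simp only: e)
    qed
    ultimately show "(?G has_vector_derivative (1 - p * x) powr (2 / p)) (at x within {0..1})"
      by (simp add: has_real_derivative_iff_has_vector_derivative)
  qed simp
  moreover have "?G 1 - ?G 0 = g p"
  proof -
    have "(1 - p) powr ((2 + p) / p) = exp (- ((2 + p) / p) * ln (1 / (1 - p)))"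
      using p1 by (simp add: powr_def ln_div)
    then show ?thesis using False assms by (simp add: g_def field_simps)
  qed
  ultimately show ?thesis by simp
qed

lemma g_mono:
  assumes "0 < p" "p \<le> q" "q \<le> 1"
  shows "g q \<le> g p"
proof (rule has_integral_le[OF g_has_integral[of q] g_has_integral[of p]])
  show "0 < q" "q \<le> 1" "0 < p" "p \<le> 1" using assms by auto
  fix s :: real assume "s \<in> {0..1}"
  then show "(1 - q * s) powr (2 / q) \<le> (1 - p * s) powr (2 / p)"
    using powr_ineq[OF assms] by auto
qed

lemma greedy_append: "greedy_probe X (xs @ ys) M = greedy_probe X ys (greedy_probe X xs M)"
  by (induction xs arbitrary: M) auto

lemma greedy_mono: "M \<subseteq> greedy_probe X xs M"
  by (induction xs arbitrary: M) (auto, blast+)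

lemma greedy_sub: "greedy_probe X xs M \<subseteq> M \<union> {f \<in> set xs. X f}"
proof (induction xs arbitrary: M)
  case Nil then show ?case by simp
next
  case (Cons a xs)
  show ?case using Cons[of "(if (\<exists>f\<in>M. adj a f) then M else if X a then insert a M else M)"]
    by (auto split: if_splits)
qed

lemma greedy_in:
  assumes "sorted (map Y L)" "e \<in> set L" "X e"
    and "\<forall>f\<in>set L. adj e f \<and> X f \<longrightarrow> Y e < Y f"
  shows "e \<in> greedy_probe X L {}"
proof -
  obtain L1 L2 where L: "L = L1 @ e # L2" using assms(2) by (meson split_list)
  have le: "\<forall>f\<in>set L1. Y f \<le> Y e" using assms(1) unfolding L by (auto simp: sorted_append)
  define M1 where "M1 = greedy_probe X L1 {}"
  have "M1 \<subseteq> {f \<in> set L1. X f}" using greedy_sub[of X L1 "{}"] by (simp add: M1_def)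
  then have "\<not> (\<exists>f\<in>M1. adj e f)" using le assms(4) unfolding L by force
  then have "greedy_probe X L {} = greedy_probe X L2 (insert e M1)"
    using assms(3) by (simp add: L greedy_append M1_def)
  then show ?thesis using greedy_mono[of "insert e M1" X L2] by auto
qed

lemma alg1_props:
  assumes "finite H"
  shows "alg1_matching H Y X \<subseteq> H"
    and "\<And>e. e \<in> H \<Longrightarrow> X e \<Longrightarrow> (\<forall>f\<in>H. adj e f \<and> X f \<longrightarrow> Y e < Y f) \<Longrightarrow> e \<in> alg1_matching H Y X"
proof -
  define L0 where "L0 = (SOME es. distinct es \<and> set es = H)"
  have "\<exists>es. distinct es \<and> set es = H" using finite_distinct_list[OF assms] by auto
  then have L0: "distinct L0 \<and> set L0 = H" unfolding L0_def by (rule someI_ex)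
  have m: "alg1_matching H Y X = greedy_probe X (sort_key Y L0) {}"
    by (simp add: alg1_matching_def L0_def)
  show "alg1_matching H Y X \<subseteq> H" using greedy_sub[of X "sort_key Y L0" "{}"] L0 by (auto simp: m)
  fix e assume "e \<in> H" "X e" "\<forall>f\<in>H. adj e f \<and> X f \<longrightarrow> Y e < Y f"
  then show "e \<in> alg1_matching H Y X" unfolding m
    by (intro greedy_in) (use L0 in auto)
qed

lemma comp_meas:
  fixes Ms :: "'i \<Rightarrow> real measure"
  assumes "\<forall>i\<in>E. sets (Ms i) = sets borel" "x \<in> E"
  shows "(\<lambda>Y. Y x) \<in> borel_measurable (PiM E Ms)"
proof -
  have "(\<lambda>Y. Y x) \<in> measurable (PiM E Ms) (Ms x)"
    by (rule measurable_component_singleton) fact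
  then show ?thesis using assms measurable_cong_sets by blast
qed

lemma meas_restrict_count:
  assumes "f \<in> measurable M (count_space UNIV)" "f \<in> space M \<rightarrow> A" "finite A"
  shows "f \<in> measurable M (count_space A)"
  unfolding measurable_count_space_eq2[OF assms(3)]
proof (intro conjI ballI)
  show "f \<in> space M \<rightarrow> A" by fact
  fix a assume "a \<in> A"
  show "f -` {a} \<inter> space M \<in> sets M"
    using measurable_sets[OF assms(1), of "{a}"] by simp
qed

lemma insort_meas:
  fixes Ms :: "'i \<Rightarrow> real measure"
  assumes "\<forall>i\<in>E. sets (Ms i) = sets borel" "x \<in> E" "set l \<subseteq> E"
  shows "(\<lambda>Y. insort_key Y x l) \<in> measurable (PiM E Ms) (count_space UNIV)"
  using assms(3)
proof (induction l)
  case Nil then show ?case by simp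
next
  case (Cons y ys)
  note [measurable] = comp_meas[OF assms(1,2)] comp_meas[OF assms(1), of y]
  have y: "y \<in> E" using Cons by simp
  have IH: "(\<lambda>Y. insort_key Y x ys) \<in> measurable (PiM E Ms) (count_space UNIV)" using Cons by simp
  have cons: "(\<lambda>Y. y # insort_key Y x ys) \<in> measurable (PiM E Ms) (count_space UNIV)"
    using measurable_compose[OF IH measurable_count_space[of "(#) y" UNIV]] by simp
  have P: "{Y \<in> space (PiM E Ms). Y x \<le> Y y} \<in> sets (PiM E Ms)"
    using borel_measurable_le[OF comp_meas[OF assms(1,2)] comp_meas[OF assms(1) y]] by simp
  show ?case
    by (simp only: insort_key.simps) (intro measurable_If cons measurable_const P, simp)
qed

definition Lset :: "'x list \<Rightarrow> 'x list set" where
  "Lset L = {ys. set ys \<subseteq> set L \<and> length ys = length L}"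

lemma finite_Lset: "finite (Lset L)"
  unfolding Lset_def using finite_lists_length_eq[of "set L" "length L"] by simp

lemma sort_meas:
  fixes Ms :: "'i \<Rightarrow> real measure"
  assumes "\<forall>i\<in>E. sets (Ms i) = sets borel" "set L \<subseteq> E"
  shows "(\<lambda>Y. sort_key Y L) \<in> measurable (PiM E Ms) (count_space UNIV)"
  using assms(2)
proof (induction L)
  case Nil then show ?case by simp
next
  case (Cons x xs)
  have g: "(\<lambda>Y. sort_key Y xs) \<in> measurable (PiM E Ms) (count_space (Lset xs))"
    by (rule meas_restrict_count) (use Cons finite_Lset[of xs] in \<open>auto simp: Lset_def\<close>)
  have "(\<lambda>Y. (\<lambda>l Y. insort_key Y x l) (sort_key Y xs) Y) \<in> measurable (PiM E Ms) (count_space UNIV)"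
  proof (rule measurable_compose_countable'[OF _ g])
    fix l assume "l \<in> Lset xs"
    then show "(\<lambda>Y. insort_key Y x l) \<in> measurable (PiM E Ms) (count_space UNIV)"
      using Cons by (intro insort_meas[OF assms(1)]) (auto simp: Lset_def)
  qed (simp add: countable_finite finite_Lset)
  then show ?case by simp
qed

lemma sets_Ydist[simp]: "sets (Ydist q) = sets borel"
  by (simp add: Ydist_def)

lemma space_Ydist[simp]: "space (Ydist q) = UNIV"
  by (simp add: Ydist_def)

lemma ifle_meas: "(\<lambda>s::real. ennreal (if P \<and> s \<le> y then a else b)) \<in> borel_measurable (Ydist q)"
proof (rule measurable_compose[OF _ measurable_ennreal], rule measurable_If)
  show "{s \<in> space (Ydist q). P \<and> s \<le> y} \<in> sets (Ydist q)"
    by (cases P) auto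
qed auto

lemma comp_int:
  assumes "0 < q" "q \<le> 1" "0 \<le> y"
  shows "ennreal (exp (- q * y)) \<le> (\<integral>\<^sup>+ s. ennreal (if s \<le> y then 1 - q else 1) \<partial>Ydist q)"
proof -
  interpret prob_space "Ydist q" by (rule prob_space_Ydist[OF assms(1,2)])
  have fin: "emeasure (Ydist q) {..y} = ennreal (measure (Ydist q) {..y})"
    by (simp add: emeasure_eq_measure)
  have "measure (Ydist q) {..y} \<le> (1 - exp (- q * y)) / q"
  proof -
    have r0: "0 \<le> (1 - exp (- q * y)) / q" using assms by (intro divide_nonneg_pos) auto
    show ?thesis using Ydist_cdf[OF assms] fin r0 by (simp add: ennreal_le_iff)
  qed
  then have m: "q * measure (Ydist q) {..y} \<le> 1 - exp (- q * y)"
    using assms(1) by (simp add: field_simps)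
  have eqf: "\<And>s. (if s \<le> y then 1 - q else 1) = 1 - q * indicator {..y} s"
    by (auto simp: indicator_def)
  have int: "integrable (Ydist q) (\<lambda>s. 1 - q * indicator {..y} s)"
  proof -
    have i1: "integrable (Ydist q) (\<lambda>s. 1::real)" by simp
    have i2: "integrable (Ydist q) (indicator {..y} :: real \<Rightarrow> real)"
      by (rule integrable_real_indicator) (auto simp: emeasure_eq_measure)
    have i3: "integrable (Ydist q) (\<lambda>s. q * indicator {..y} s)"
      using i2 by (rule integrable_mult_right)
    show ?thesis using Bochner_Integration.integrable_diff[OF i1 i3] .
  qed
  have "(\<integral>\<^sup>+ s. ennreal (if s \<le> y then 1 - q else 1) \<partial>Ydist q)
      = ennreal (\<integral> s. (1 - q * indicator {..y} s) \<partial>Ydist q)"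
    unfolding eqf
    by (rule nn_integral_eq_integral[OF int]) (use assms in \<open>auto simp: indicator_def\<close>)
  also have "(\<integral> s. (1 - q * indicator {..y} s) \<partial>Ydist q) = 1 - q * measure (Ydist q) {..y}"
  proof -
    have i1: "integrable (Ydist q) (\<lambda>s. 1::real)" by simp
    have i3: "integrable (Ydist q) (\<lambda>s. q * indicator {..y} s)"
      by (rule integrable_mult_right, rule integrable_real_indicator) (auto simp: emeasure_eq_measure)
    have "(\<integral> s. (1 - q * indicator {..y} s) \<partial>Ydist q) = (\<integral> s. 1 \<partial>Ydist q) - (\<integral> s. q * indicator {..y} s \<partial>Ydist q)"
      by (rule Bochner_Integration.integral_diff[OF i1 i3])
    then show ?thesis using prob_space by simp
  qed
  finally show ?thesis using m by (simp add: ennreal_leI)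
qed

lemma if_le_meas:
  fixes Ms :: "'i \<Rightarrow> real measure"
  assumes "\<forall>i\<in>E. sets (Ms i) = sets borel" "a \<in> E" "b \<in> E"
  shows "(\<lambda>Y. if P \<and> Y a \<le> Y b then (c::real) else d) \<in> borel_measurable (PiM E Ms)"
proof (rule measurable_If)
  have "{Y \<in> space (PiM E Ms). Y a \<le> Y b} \<in> sets (PiM E Ms)"
    using borel_measurable_le[OF comp_meas[OF assms(1,2)] comp_meas[OF assms(1,3)]] by simp
  then show "{Y \<in> space (PiM E Ms). P \<and> Y a \<le> Y b} \<in> sets (PiM E Ms)"
    by (cases P) auto
qed auto

lemma ennreal_prod_mono:
  assumes "\<And>i. i \<in> I \<Longrightarrow> (a i :: ennreal) \<le> b i"
  shows "(\<Prod>i\<in>I. a i) \<le> (\<Prod>i\<in>I. b i)"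
  using assms
proof (induction I rule: infinite_finite_induct)
  case (insert x F)
  then show ?case by (simp add: mult_mono)
qed auto

lemma step4:
  fixes E :: "'i set" and p :: "'i \<Rightarrow> real"
  assumes E: "finite E" "e \<in> E" and p: "\<forall>i\<in>E. 0 < p i \<and> p i \<le> 1"
  shows "(\<integral>\<^sup>+ y. ennreal (exp (- y * (\<Sum>f\<in>E - {e}. if f \<in> N then p f else 0))) \<partial>Ydist (p e))
    \<le> (\<integral>\<^sup>+ Y. ennreal (\<Prod>f\<in>E - {e}. if f \<in> N \<and> Y f \<le> Y e then 1 - p f else 1) \<partial>PiM E (\<lambda>i. Ydist (p i)))"
proof -
  define Ms where "Ms i = Ydist (if i \<in> E then p i else 1)" for i
  have ps: "prob_space (Ms i)" for i
    unfolding Ms_def using p by (intro prob_space_Ydist) auto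
  interpret PP: product_prob_space Ms UNIV
    by (simp add: product_prob_space_def product_sigma_finite_def product_prob_space_axioms_def ps
        prob_space_imp_sigma_finite)
  have PiE: "PiM E (\<lambda>i. Ydist (p i)) = PiM E Ms"
    by (rule PiM_cong) (auto simp: Ms_def)
  define I where "I = E - {e}"
  have EI: "E = insert e I" "finite I" "e \<notin> I" using E by (auto simp: I_def)
  have setsM: "\<forall>i\<in>E. sets (Ms i) = sets borel" by (simp add: Ms_def)
  define F where "F Y = (\<Prod>f\<in>I. if f \<in> N \<and> Y f \<le> Y e then 1 - p f else 1)" for Y :: "'i \<Rightarrow> real"
  have Fm: "(\<lambda>Y. ennreal (F Y)) \<in> borel_measurable (PiM (insert e I) Ms)"
    unfolding F_def EI(1)[symmetric]
    by (intro measurable_compose[OF _ measurable_ennreal] borel_measurable_prod if_le_meas[OF setsM])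
       (auto simp: I_def E)
  have "(\<integral>\<^sup>+ Y. ennreal (F Y) \<partial>PiM (insert e I) Ms)
      = (\<integral>\<^sup>+ y. (\<integral>\<^sup>+ Z. ennreal (F (Z(e := y))) \<partial>PiM I Ms) \<partial>Ms e)"
    by (rule PP.product_nn_integral_insert_rev[OF EI(2,3) Fm])
  also have "\<dots> \<ge> (\<integral>\<^sup>+ y. ennreal (exp (- y * (\<Sum>f\<in>I. if f \<in> N then p f else 0))) \<partial>Ms e)"
  proof (rule nn_integral_mono_AE)
    have "AE y in Ms e. 0 \<le> y"
      unfolding Ms_def Ydist_def using E
      by (subst AE_density) (auto split: if_splits)
    then show "AE y in Ms e. ennreal (exp (- y * (\<Sum>f\<in>I. if f \<in> N then p f else 0)))
        \<le> (\<integral>\<^sup>+ Z. ennreal (F (Z(e := y))) \<partial>PiM I Ms)"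
    proof (rule eventually_mono)
      fix y :: real assume y: "0 \<le> y"
      have "(\<integral>\<^sup>+ Z. ennreal (F (Z(e := y))) \<partial>PiM I Ms)
          = (\<integral>\<^sup>+ Z. (\<Prod>f\<in>I. ennreal (if f \<in> N \<and> Z f \<le> y then 1 - p f else 1)) \<partial>PiM I Ms)"
      proof (rule nn_integral_cong)
        fix Z :: "'i \<Rightarrow> real"
        have "F (Z(e := y)) = (\<Prod>f\<in>I. if f \<in> N \<and> Z f \<le> y then 1 - p f else 1)"
          unfolding F_def using EI(3) by (intro prod.cong) auto
        then show "ennreal (F (Z(e := y))) = (\<Prod>f\<in>I. ennreal (if f \<in> N \<and> Z f \<le> y then 1 - p f else 1))"
          using EI p by (simp add: prod_ennreal)
      qed
      also have "\<dots> = (\<Prod>f\<in>I. \<integral>\<^sup>+ s. ennreal (if f \<in> N \<and> s \<le> y then 1 - p f else 1) \<partial>Ms f)"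
        by (rule PP.product_nn_integral_prod) (auto simp: EI Ms_def intro!: ifle_meas)
      also have "\<dots> \<ge> (\<Prod>f\<in>I. ennreal (if f \<in> N then exp (- p f * y) else 1))"
      proof (rule ennreal_prod_mono)
        fix f assume f: "f \<in> I"
        then have fE: "f \<in> E" by (simp add: I_def)
        show "ennreal (if f \<in> N then exp (- p f * y) else 1)
            \<le> (\<integral>\<^sup>+ s. ennreal (if f \<in> N \<and> s \<le> y then 1 - p f else 1) \<partial>Ms f)"
        proof (cases "f \<in> N")
          case True
          then show ?thesis using comp_int[of "p f" y] p fE y by (simp add: Ms_def)
        next
          case False
          show ?thesis using False prob_space.emeasure_space_1[OF ps[of f]] by simp
        qed
      qed
      also have "(\<Prod>f\<in>I. ennreal (if f \<in> N then exp (- p f * y) else 1))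
          = ennreal (exp (- y * (\<Sum>f\<in>I. if f \<in> N then p f else 0)))"
      proof -
        have "(\<Prod>f\<in>I. ennreal (if f \<in> N then exp (- p f * y) else 1))
            = ennreal (\<Prod>f\<in>I. exp (- y * (if f \<in> N then p f else 0)))"
          by (subst prod_ennreal) (auto intro!: arg_cong[where f=ennreal] prod.cong simp: mult.commute)
        also have "\<dots> = ennreal (exp (- y * (\<Sum>f\<in>I. if f \<in> N then p f else 0)))"
          by (simp add: exp_sum[symmetric] sum_distrib_left EI(2))
        finally show ?thesis .
      qed
      finally show "ennreal (exp (- y * (\<Sum>f\<in>I. if f \<in> N then p f else 0)))
        \<le> (\<integral>\<^sup>+ Z. ennreal (F (Z(e := y))) \<partial>PiM I Ms)" .
    qed
  qed
  finally have X: "(\<integral>\<^sup>+ y. ennreal (exp (- y * (\<Sum>f\<in>I. if f \<in> N then p f else 0))) \<partial>Ms e)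
      \<le> (\<integral>\<^sup>+ Y. ennreal (F Y) \<partial>PiM (insert e I) Ms)" .
  have Me: "Ms e = Ydist (p e)" by (simp add: Ms_def E)
  show ?thesis
    using X unfolding Me F_def I_def insert_Diff[OF E(2)] PiE .
qed

lemma finite_set_PX:
  assumes "finite E"
  shows "finite (set_pmf (Pi_pmf E False (\<lambda>e. bernoulli_pmf (p e))))"
  using assms by (auto simp: set_Pi_pmf intro!: finite_PiE_dflt)

lemma step3:
  fixes E :: "('a \<times> 'b) set"
  assumes E: "finite E" "H \<subseteq> E" and p: "\<forall>i\<in>E. 0 < p i \<and> p i \<le> 1" and w: "\<forall>i\<in>E. 0 \<le> w i"
  shows "(\<Sum>e\<in>H. w e * (p e * (\<Prod>f\<in>E - {e}. if f \<in> H \<and> adj e f \<and> Y f \<le> Y e then 1 - p f else 1)))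
    \<le> measure_pmf.expectation (Pi_pmf E False (\<lambda>e. bernoulli_pmf (p e))) (\<lambda>X. \<Sum>e\<in>alg1_matching H Y X. w e)"
proof -
  let ?PX = "Pi_pmf E False (\<lambda>e. bernoulli_pmf (p e))"
  have finH: "finite H" using E finite_subset by auto
  define h where "h e f b = (if f = e then (if b then 1 else 0)
      else if f \<in> H \<and> adj e f \<and> Y f \<le> Y e then (if b then 0 else 1) else (1::real))" for e f b
  define cond where "cond e X = (X e \<and> (\<forall>f\<in>H. adj e f \<and> X f \<longrightarrow> Y e < Y f))" for e X
  have ind: "(if cond e X then 1 else 0) = (\<Prod>f\<in>E. h e f (X f))" if "e \<in> E" for e X
  proof (cases "cond e X")
    case True
    then have "\<forall>f\<in>E. h e f (X f) = 1"
      unfolding cond_def h_def by (auto simp: adj_def not_le)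
    then show ?thesis using True by simp
  next
    case False
    then have "\<exists>f\<in>E. h e f (X f) = 0"
      unfolding cond_def h_def using that E(2) by (auto simp: adj_def not_less)
    then show ?thesis using False E(1) by (simp add: prod_zero)
  qed
  have pw: "(\<Sum>e\<in>H. w e * (if cond e X then 1 else 0)) \<le> (\<Sum>e\<in>alg1_matching H Y X. w e)" for X
  proof -
    have "(\<Sum>e\<in>H. w e * (if cond e X then 1 else 0)) = (\<Sum>e\<in>{e\<in>H. cond e X}. w e)"
      using finH by (simp add: sum.inter_filter[symmetric] if_distrib cong: if_cong)
    also have "\<dots> \<le> (\<Sum>e\<in>alg1_matching H Y X. w e)"
    proof (rule sum_mono2)
      show "finite (alg1_matching H Y X)" using alg1_props(1)[OF finH] finH finite_subset by blast
      show "{e \<in> H. cond e X} \<subseteq> alg1_matching H Y X"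
        using alg1_props(2)[OF finH] unfolding cond_def by blast
      show "\<And>b. b \<in> alg1_matching H Y X - {e \<in> H. cond e X} \<Longrightarrow> 0 \<le> w b"
        using alg1_props(1)[OF finH] E w by blast
    qed
    finally show ?thesis .
  qed
  have intg: "integrable ?PX f" for f :: "('a \<times> 'b \<Rightarrow> bool) \<Rightarrow> real"
    by (rule integrable_measure_pmf_finite[OF finite_set_PX[OF E(1)]])
  have expe: "measure_pmf.expectation ?PX (\<lambda>X. if cond e X then 1 else 0)
      = p e * (\<Prod>f\<in>E - {e}. if f \<in> H \<and> adj e f \<and> Y f \<le> Y e then 1 - p f else 1)" if e: "e \<in> H" for e
  proof -
    have eE: "e \<in> E" using e E by auto
    have "measure_pmf.expectation ?PX (\<lambda>X. if cond e X then 1 else 0)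
        = measure_pmf.expectation ?PX (\<lambda>X. \<Prod>f\<in>E. h e f (X f))"
      using ind[OF eE] by simp
    also have "\<dots> = (\<Prod>f\<in>E. measure_pmf.expectation (bernoulli_pmf (p f)) (h e f))"
      by (rule expectation_prod_Pi_pmf[OF E(1)])
         (auto simp: h_def intro!: integrable_measure_pmf_finite)
    also have "\<dots> = (\<Prod>f\<in>E. if f = e then p e else if f \<in> H \<and> adj e f \<and> Y f \<le> Y e then 1 - p f else 1)"
      using p by (intro prod.cong) (auto simp: h_def)
    also have "\<dots> = p e * (\<Prod>f\<in>E - {e}. if f \<in> H \<and> adj e f \<and> Y f \<le> Y e then 1 - p f else 1)"
      using eE E(1) by (subst prod.remove[of E e]) (auto intro!: prod.cong)
    finally show ?thesis .
  qed
  have "(\<Sum>e\<in>H. w e * (p e * (\<Prod>f\<in>E - {e}. if f \<in> H \<and> adj e f \<and> Y f \<le> Y e then 1 - p f else 1)))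
      = (\<Sum>e\<in>H. w e * measure_pmf.expectation ?PX (\<lambda>X. if cond e X then 1 else 0))"
    using expe by simp
  also have "\<dots> = measure_pmf.expectation ?PX (\<lambda>X. \<Sum>e\<in>H. w e * (if cond e X then 1 else 0))"
  proof -
    have "(\<Sum>e\<in>H. w e * measure_pmf.expectation ?PX (\<lambda>X. if cond e X then 1 else 0))
        = (\<Sum>e\<in>H. measure_pmf.expectation ?PX (\<lambda>X. w e * (if cond e X then 1 else 0)))"
      by (intro sum.cong refl integral_mult_right_zero[symmetric])
    also have "\<dots> = measure_pmf.expectation ?PX (\<lambda>X. \<Sum>e\<in>H. w e * (if cond e X then 1 else 0))"
      by (rule Bochner_Integration.integral_sum[symmetric]) (rule intg)
    finally show ?thesis .
  qed
  also have "\<dots> \<le> measure_pmf.expectation ?PX (\<lambda>X. \<Sum>e\<in>alg1_matching H Y X. w e)"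
    by (rule integral_mono[OF intg intg pw])
  finally show ?thesis .
qed

definition Sfun :: "('a \<times> 'b) set \<Rightarrow> ('a \<times> 'b \<Rightarrow> real) \<Rightarrow> ('a \<times> 'b) set \<Rightarrow> ('a \<times> 'b) \<Rightarrow> real" where
  "Sfun E p H e = (\<Sum>f\<in>E - {e}. if f \<in> {f \<in> H. adj e f} then p f else 0)"

lemma perH:
  fixes E :: "('a \<times> 'b) set"
  assumes E: "finite E" "H \<subseteq> E" and p: "\<forall>i\<in>E. 0 < p i \<and> p i \<le> 1" and w: "\<forall>i\<in>E. 0 \<le> w i"
  shows "(\<Sum>e\<in>H. ennreal (w e * p e) * (\<integral>\<^sup>+ y. ennreal (exp (- y * Sfun E p H e)) \<partial>Ydist (p e)))
    \<le> ennreal (\<integral>Y. measure_pmf.expectation (Pi_pmf E False (\<lambda>e. bernoulli_pmf (p e)))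
              (\<lambda>X. \<Sum>e\<in>alg1_matching H Y X. w e) \<partial>(PiM E (\<lambda>e. Ydist (p e))))"
proof -
  let ?PX = "Pi_pmf E False (\<lambda>e. bernoulli_pmf (p e))"
  let ?PY = "PiM E (\<lambda>e. Ydist (p e))"
  define \<phi> where "\<phi> Y = measure_pmf.expectation ?PX (\<lambda>X. \<Sum>e\<in>alg1_matching H Y X. w e)" for Y
  define F where "F e Y = (\<Prod>f\<in>E - {e}. if f \<in> {f \<in> H. adj e f} \<and> Y f \<le> Y e then 1 - p f else 1)" for e and Y :: "'a \<times> 'b \<Rightarrow> real"
  have finH: "finite H" using E finite_subset by auto
  have setsM: "\<forall>i\<in>E. sets (Ydist (p i)) = sets borel" by simp
  interpret PY: prob_space ?PY
    by (rule prob_space_PiM) (use p in \<open>auto intro!: prob_space_Ydist\<close>)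
  define L0 where "L0 = (SOME es. distinct es \<and> set es = H)"
  have "\<exists>es. distinct es \<and> set es = H" using finite_distinct_list[OF finH] by auto
  then have L0: "distinct L0 \<and> set L0 = H" unfolding L0_def by (rule someI_ex)
  have phi_eq: "\<phi> = (\<lambda>l. measure_pmf.expectation ?PX (\<lambda>X. \<Sum>e\<in>greedy_probe X l {}. w e)) \<circ> (\<lambda>Y. sort_key Y L0)"
    by (auto simp: fun_eq_iff \<phi>_def alg1_matching_def L0_def)
  have phim: "\<phi> \<in> borel_measurable ?PY"
    unfolding phi_eq
    by (rule measurable_comp[OF sort_meas[OF setsM]]) (use L0 E in auto)
  have phi_nonneg: "0 \<le> \<phi> Y" for Y
    unfolding \<phi>_def
  proof (rule integral_nonneg_AE, rule AE_I2)
    fix X show "0 \<le> (\<Sum>e\<in>alg1_matching H Y X. w e)"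
      using alg1_props(1)[OF finH] E w by (intro sum_nonneg) blast
  qed
  have phi_le: "\<phi> Y \<le> (\<Sum>e\<in>E. w e)" for Y
  proof -
    have "\<phi> Y \<le> measure_pmf.expectation ?PX (\<lambda>X. \<Sum>e\<in>E. w e)"
      unfolding \<phi>_def
    proof (rule integral_mono)
      show "integrable ?PX (\<lambda>X. \<Sum>e\<in>alg1_matching H Y X. w e)" "integrable ?PX (\<lambda>X. \<Sum>e\<in>E. w e)"
        by (auto intro!: integrable_measure_pmf_finite finite_set_PX E)
      fix X show "(\<Sum>e\<in>alg1_matching H Y X. w e) \<le> (\<Sum>e\<in>E. w e)"
        using alg1_props(1)[OF finH] E w by (intro sum_mono2) auto
    qed
    then show ?thesis by simp
  qed
  have phi_int: "integrable ?PY \<phi>"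
    by (rule PY.integrable_const_bound[where B="\<Sum>e\<in>E. w e"]) (use phim phi_nonneg phi_le in auto)
  have Fm: "(\<lambda>Y. ennreal (F e Y)) \<in> borel_measurable ?PY" if "e \<in> H" for e
    unfolding F_def using that E
    by (intro measurable_compose[OF _ measurable_ennreal] borel_measurable_prod if_le_meas[OF setsM]) auto
  have F_nonneg: "0 \<le> F e Y" for e Y
    unfolding F_def using p by (intro prod_nonneg) auto
  have "(\<Sum>e\<in>H. ennreal (w e * p e) * (\<integral>\<^sup>+ y. ennreal (exp (- y * Sfun E p H e)) \<partial>Ydist (p e)))
      \<le> (\<Sum>e\<in>H. ennreal (w e * p e) * (\<integral>\<^sup>+ Y. ennreal (F e Y) \<partial>?PY))"
    unfolding Sfun_def F_def
    by (intro sum_mono mult_left_mono step4) (use E p in auto)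
  also have "\<dots> = (\<integral>\<^sup>+ Y. (\<Sum>e\<in>H. ennreal (w e * p e) * ennreal (F e Y)) \<partial>?PY)"
  proof -
    have "(\<Sum>e\<in>H. ennreal (w e * p e) * (\<integral>\<^sup>+ Y. ennreal (F e Y) \<partial>?PY))
        = (\<Sum>e\<in>H. (\<integral>\<^sup>+ Y. ennreal (w e * p e) * ennreal (F e Y) \<partial>?PY))"
      by (intro sum.cong refl nn_integral_cmult[symmetric] Fm)
    also have "\<dots> = (\<integral>\<^sup>+ Y. (\<Sum>e\<in>H. ennreal (w e * p e) * ennreal (F e Y)) \<partial>?PY)"
      by (rule nn_integral_sum[symmetric]) (intro borel_measurable_times_ennreal borel_measurable_const Fm)
    finally show ?thesis .
  qed
  also have "\<dots> \<le> (\<integral>\<^sup>+ Y. ennreal (\<phi> Y) \<partial>?PY)"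
  proof (rule nn_integral_mono)
    fix Y
    have "(\<Sum>e\<in>H. ennreal (w e * p e) * ennreal (F e Y)) = ennreal (\<Sum>e\<in>H. w e * (p e * F e Y))"
    proof -
      have nn: "0 \<le> w e * p e" if "e \<in> H" for e
      proof -
        from that E p w have "0 \<le> w e" "0 < p e" by auto
        then show ?thesis by simp
      qed
      have "(\<Sum>e\<in>H. ennreal (w e * p e) * ennreal (F e Y)) = (\<Sum>e\<in>H. ennreal (w e * (p e * F e Y)))"
        by (intro sum.cong refl) (simp add: ennreal_mult[OF nn F_nonneg, symmetric] mult.assoc)
      also have "\<dots> = ennreal (\<Sum>e\<in>H. w e * (p e * F e Y))"
      proof (rule sum_ennreal)
        fix e assume eH: "e \<in> H"
        have "0 \<le> (w e * p e) * F e Y" by (rule mult_nonneg_nonneg[OF nn[OF eH] F_nonneg])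
        then show "0 \<le> w e * (p e * F e Y)" by (simp only: mult.assoc)
      qed
      finally show ?thesis .
    qed
    also have "\<dots> \<le> ennreal (\<phi> Y)"
      using step3[OF E p w, of Y] unfolding \<phi>_def F_def by (intro ennreal_leI) simp
    finally show "(\<Sum>e\<in>H. ennreal (w e * p e) * ennreal (F e Y)) \<le> ennreal (\<phi> Y)" .
  qed
  also have "\<dots> = ennreal (\<integral>Y. \<phi> Y \<partial>?PY)"
    by (rule nn_integral_eq_integral[OF phi_int]) (use phi_nonneg in auto)
  finally show ?thesis unfolding \<phi>_def .
qed

lemma jensen_pt:
  fixes a S :: "'h \<Rightarrow> real"
  assumes "finite A" "\<And>H. H \<in> A \<Longrightarrow> 0 \<le> a H" "(\<Sum>H\<in>A. a H) = X"
    and "(\<Sum>H\<in>A. a H * S H) \<le> X * B" "0 \<le> y" "B \<le> 2"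
  shows "X * exp (- 2 * y) \<le> (\<Sum>H\<in>A. a H * exp (- y * S H))"
proof -
  have pt: "a H * (exp (- y * B) * (1 - y * (S H - B))) \<le> a H * exp (- y * S H)" if "H \<in> A" for H
  proof (rule mult_left_mono)
    have "exp (- y * B) * (1 - y * (S H - B)) \<le> exp (- y * B) * exp (- y * (S H - B))"
      using exp_ge_add_one_self[of "- y * (S H - B)"] by (intro mult_left_mono) auto
    also have "\<dots> = exp (- y * S H)" by (simp add: exp_add[symmetric] algebra_simps)
    finally show "exp (- y * B) * (1 - y * (S H - B)) \<le> exp (- y * S H)" .
  qed (use assms(2) that in auto)
  have X0: "0 \<le> X" using assms(2,3) sum_nonneg by metis
  have "(\<Sum>H\<in>A. a H * (exp (- y * B) * (1 - y * (S H - B))))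
      = exp (- y * B) * (X - y * ((\<Sum>H\<in>A. a H * S H) - X * B))"
    using assms(3)[symmetric]
    by (simp add: algebra_simps sum_distrib_left sum_distrib_right sum_subtractf sum.distrib)
  also have "\<dots> \<ge> exp (- y * B) * X"
  proof -
    have "y * ((\<Sum>H\<in>A. a H * S H) - X * B) \<le> 0"
      using assms(4,5) by (simp add: mult_nonneg_nonpos)
    then show ?thesis by (intro mult_left_mono) auto
  qed
  moreover have "X * exp (- 2 * y) \<le> exp (- y * B) * X"
  proof -
    have "y * B \<le> y * 2" using assms(5,6) by (simp add: mult_left_mono)
    then have "exp (- 2 * y) \<le> exp (- y * B)" by (simp add: algebra_simps)
    then show ?thesis using X0 by (simp add: mult.commute mult_left_mono)
  qed
  ultimately have "X * exp (- 2 * y) \<le> (\<Sum>H\<in>A. a H * (exp (- y * B) * (1 - y * (S H - B))))"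
    by linarith
  also have "\<dots> \<le> (\<Sum>H\<in>A. a H * exp (- y * S H))"
    by (rule sum_mono) (rule pt)
  finally show ?thesis .
qed

lemma prob_sum:
  assumes "finite E" "set_pmf D \<subseteq> Pow E"
  shows "measure_pmf.prob D {H. P H} = (\<Sum>H\<in>{H\<in>Pow E. P H}. pmf D H)"
proof -
  have fin: "finite {H\<in>Pow E. P H}" using assms(1) by simp
  have "measure_pmf.prob D {H. P H} = measure_pmf.prob D ({H. P H} \<inter> set_pmf D)"
    by (simp add: measure_Int_set_pmf)
  also have "{H. P H} \<inter> set_pmf D = {H\<in>Pow E. P H} \<inter> set_pmf D" using assms(2) by auto
  also have "measure_pmf.prob D \<dots> = measure_pmf.prob D {H\<in>Pow E. P H}"
    by (simp add: measure_Int_set_pmf)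
  also have "\<dots> = (\<Sum>H\<in>{H\<in>Pow E. P H}. pmf D H)"
    by (rule measure_measure_pmf_finite[OF fin])
  finally show ?thesis .
qed

lemma pair_bound:
  assumes gk: "gkps_rounding E x D" and ef: "e \<in> E" "f \<in> E" "adj e f"
  shows "measure_pmf.prob D {H. e \<in> H \<and> f \<in> H} \<le> x e * x f"
proof -
  have ne: "e \<noteq> f" using ef by (simp add: adj_def)
  have set_eq: "{H. \<forall>g\<in>{e, f}. (g \<in> H) = True} = {H. e \<in> H \<and> f \<in> H}" by auto
  have prod_eq: "(\<Prod>g\<in>{e, f}. measure_pmf.prob D {H. (g \<in> H) = True}) = x e * x f"
    using gk ef ne unfolding gkps_rounding_def by simp
  show ?thesis
  proof (cases "fst e = fst f")
    case True
    then have "{e, f} \<subseteq> deltaL E (fst e)" using ef by (auto simp: deltaL_def)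
    then have "measure_pmf.prob D {H. \<forall>g\<in>{e, f}. (g \<in> H) = True}
        \<le> (\<Prod>g\<in>{e, f}. measure_pmf.prob D {H. (g \<in> H) = True})"
      using gk unfolding gkps_rounding_def by blast
    then show ?thesis using set_eq prod_eq by simp
  next
    case False
    then have "snd e = snd f" using ef by (simp add: adj_def)
    then have "{e, f} \<subseteq> deltaR E (snd e)" using ef by (auto simp: deltaR_def)
    then have "measure_pmf.prob D {H. \<forall>g\<in>{e, f}. (g \<in> H) = True}
        \<le> (\<Prod>g\<in>{e, f}. measure_pmf.prob D {H. (g \<in> H) = True})"
      using gk unfolding gkps_rounding_def by blast
    then show ?thesis using set_eq prod_eq by simp
  qed
qed

lemma B_bound:
  assumes "finite E" "lp_feasible E p tL tR x" "\<forall>i\<in>E. 0 < p i \<and> p i \<le> 1"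
  shows "(\<Sum>f\<in>E - {e}. if adj e f then p f * x f else 0) \<le> 2"
proof -
  have nn: "\<forall>f\<in>E. 0 \<le> p f * x f"
  proof
    fix f assume f: "f \<in> E"
    then have "0 < p f" "0 \<le> x f" using assms(2,3) unfolding lp_feasible_def by auto
    then show "0 \<le> p f * x f" by simp
  qed
  have L: "(\<Sum>f\<in>deltaL E (fst e). p f * x f) \<le> 1" and R: "(\<Sum>f\<in>deltaR E (snd e). p f * x f) \<le> 1"
    using assms(2) unfolding lp_feasible_def by auto
  have "(\<Sum>f\<in>E - {e}. if adj e f then p f * x f else 0)
      \<le> (\<Sum>f\<in>E. (if fst f = fst e then p f * x f else 0) + (if snd f = snd e then p f * x f else 0))"
  proof -
    have "(\<Sum>f\<in>E - {e}. if adj e f then p f * x f else 0) \<le> (\<Sum>f\<in>E. if adj e f then p f * x f else 0)"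
      using assms(1) nn by (intro sum_mono2) auto
    also have "\<dots> \<le> (\<Sum>f\<in>E. (if fst f = fst e then p f * x f else 0) + (if snd f = snd e then p f * x f else 0))"
      using nn by (intro sum_mono) (auto simp: adj_def)
    finally show ?thesis .
  qed
  also have "\<dots> = (\<Sum>f\<in>deltaL E (fst e). p f * x f) + (\<Sum>f\<in>deltaR E (snd e). p f * x f)"
    using assms(1) by (simp add: sum.distrib sum.inter_filter deltaL_def deltaR_def)
  finally show ?thesis using L R by linarith
qed

lemma meas_Ydist: "f \<in> borel_measurable borel \<Longrightarrow> f \<in> borel_measurable (Ydist q)"
  using measurable_cong_sets[OF sets_Ydist refl] by blast

lemma AE_Ydist: "AE y in Ydist q. 0 \<le> y"
  unfolding Ydist_def by (subst AE_density) (auto split: if_splits)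

lemma final_real:
  fixes E :: "'e set"
  assumes "finite E" "\<forall>e\<in>E. 0 < p e \<and> p e \<le> 1" "\<forall>e\<in>E. 0 \<le> w e * p e * x e"
    and "0 < \<delta>" "\<delta> < 1"
    and "\<gamma> * (\<Sum>e\<in>E. w e * p e * x e) = (\<Sum>e\<in>{e\<in>E. \<delta> \<le> p e}. w e * p e * x e)"
  shows "(\<gamma> / 3 + g \<delta> * (1 - \<gamma>)) * (\<Sum>e\<in>E. w e * p e * x e) \<le> (\<Sum>e\<in>E. w e * p e * x e * g (p e))"
proof -
  let ?L = "\<Sum>e\<in>E. w e * p e * x e"
  let ?A = "\<Sum>e\<in>{e\<in>E. \<delta> \<le> p e}. w e * p e * x e"
  let ?B = "\<Sum>e\<in>{e\<in>E. \<not> \<delta> \<le> p e}. w e * p e * x e"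
  have Aeq: "?A = (\<Sum>e\<in>E. if \<delta> \<le> p e then w e * p e * x e else 0)"
    by (rule sum.inter_filter[OF assms(1)])
  have Beq: "?B = (\<Sum>e\<in>E. if \<not> \<delta> \<le> p e then w e * p e * x e else 0)"
    by (rule sum.inter_filter[OF assms(1)])
  have LAB: "?L = ?A + ?B"
    unfolding Aeq Beq sum.distrib[symmetric] by (rule sum.cong) auto
  have g1: "g 1 = 1/3" by (simp add: g_def)
  have "(\<Sum>e\<in>E. w e * p e * x e * (if \<delta> \<le> p e then 1/3 else g \<delta>)) \<le> (\<Sum>e\<in>E. w e * p e * x e * g (p e))"
  proof (rule sum_mono)
    fix e assume e: "e \<in> E"
    have "(if \<delta> \<le> p e then 1/3 else g \<delta>) \<le> g (p e)"
      using g_mono[of "p e" 1] g_mono[of "p e" \<delta>] assms(2,5) e g1 by auto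
    then show "w e * p e * x e * (if \<delta> \<le> p e then 1/3 else g \<delta>) \<le> w e * p e * x e * g (p e)"
      using assms(3) e by (intro mult_left_mono) auto
  qed
  moreover have "(\<Sum>e\<in>E. w e * p e * x e * (if \<delta> \<le> p e then 1/3 else g \<delta>)) = ?A / 3 + g \<delta> * ?B"
    unfolding Aeq Beq sum_divide_distrib sum_distrib_left sum.distrib[symmetric] by (rule sum.cong) auto
  moreover have "(\<gamma> / 3 + g \<delta> * (1 - \<gamma>)) * ?L = ?A / 3 + g \<delta> * ?B"
  proof -
    have "(\<gamma> / 3 + g \<delta> * (1 - \<gamma>)) * ?L = (\<gamma> * ?L) / 3 + g \<delta> * (?L - \<gamma> * ?L)"
      by (simp add: algebra_simps)
    also have "\<dots> = ?A / 3 + g \<delta> * (?L - ?A)" by (simp only: assms(6))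
    also have "\<dots> = ?A / 3 + g \<delta> * ?B" using LAB by simp
    finally show ?thesis .
  qed
  ultimately show ?thesis by linarith
qed

theorem lemma3:
  fixes E :: "('a \<times> 'b) set"
    and p w x :: "'a \<times> 'b \<Rightarrow> real"
    and tL :: "'a \<Rightarrow> nat" and tR :: "'b \<Rightarrow> nat"
    and D :: "('a \<times> 'b) set pmf"
    and \<delta> \<gamma> :: real
  assumes "finite E"
    and "\<forall>e\<in>E. 0 < p e \<and> p e \<le> 1"
    and "\<forall>e\<in>E. 0 \<le> w e"
    and "\<forall>u. 0 < tL u" and "\<forall>v. 0 < tR v"
    and "lp_optimal E p w tL tR x"
    and "gkps_rounding E x D"
    and "0 < \<delta>" and "\<delta> < 1"
    and "0 \<le> \<gamma>" and "\<gamma> \<le> 1"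
    and "\<gamma> * lp_obj E p w x = (\<Sum>e\<in>{e\<in>E. \<delta> \<le> p e}. w e * p e * x e)"
  shows "alg1_value E p w D \<ge> (\<gamma> / 3 + g \<delta> * (1 - \<gamma>)) * lp_obj E p w x"
proof -
  note fin = assms(1) and p = assms(2) and w = assms(3) and gk = assms(7)
  have lpf: "lp_feasible E p tL tR x" using assms(6) by (simp add: lp_optimal_def)
  have xnn: "\<forall>e\<in>E. 0 \<le> x e" using lpf by (simp add: lp_feasible_def)
  have setD: "set_pmf D \<subseteq> Pow E" using gk by (auto simp: gkps_rounding_def)
  have marg: "\<And>e. e \<in> E \<Longrightarrow> measure_pmf.prob D {H. e \<in> H} = x e" using gk by (simp add: gkps_rounding_def)
  let ?PX = "Pi_pmf E False (\<lambda>e. bernoulli_pmf (p e))"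
  let ?PY = "PiM E (\<lambda>e. Ydist (p e))"
  define V where "V H = (\<integral>Y. measure_pmf.expectation ?PX (\<lambda>X. \<Sum>e\<in>alg1_matching H Y X. w e) \<partial>?PY)" for H
  define I where "I e H = (\<integral>\<^sup>+ y. ennreal (exp (- y * Sfun E p H e)) \<partial>Ydist (p e))" for e H
  have finPow: "finite (Pow E)" using fin by simp
  have a: "alg1_value E p w D = (\<Sum>H\<in>Pow E. pmf D H * V H)"
    unfolding alg1_value_def V_def
    by (subst integral_measure_pmf[OF finPow]) (use setD in auto)
  have Vnn: "0 \<le> V H" if "H \<subseteq> E" for H
  proof -
    have finH: "finite H" using that fin finite_subset by auto
    show ?thesis unfolding V_def
      by (intro integral_nonneg_AE AE_I2 sum_nonneg)
         (use alg1_props(1)[OF finH] that w in blast)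
  qed
  have "(\<Sum>H\<in>Pow E. ennreal (pmf D H) * (\<Sum>e\<in>H. ennreal (w e * p e) * I e H))
      \<le> (\<Sum>H\<in>Pow E. ennreal (pmf D H) * ennreal (V H))"
  proof (rule sum_mono)
    fix H assume "H \<in> Pow E"
    then have HE: "H \<subseteq> E" by auto
    show "ennreal (pmf D H) * (\<Sum>e\<in>H. ennreal (w e * p e) * I e H) \<le> ennreal (pmf D H) * ennreal (V H)"
      by (rule mult_left_mono) (unfold V_def I_def, rule perH[OF fin HE p w], simp)
  qed
  also have "\<dots> = ennreal (alg1_value E p w D)"
  proof -
    have "(\<Sum>H\<in>Pow E. ennreal (pmf D H) * ennreal (V H)) = (\<Sum>H\<in>Pow E. ennreal (pmf D H * V H))"
    proof (rule sum.cong[OF refl])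
      fix H assume "H \<in> Pow E"
      then have "0 \<le> V H" using Vnn by auto
      then show "ennreal (pmf D H) * ennreal (V H) = ennreal (pmf D H * V H)"
        by (rule ennreal_mult[OF pmf_nonneg, symmetric])
    qed
    also have "\<dots> = ennreal (\<Sum>H\<in>Pow E. pmf D H * V H)"
    proof (rule sum_ennreal)
      fix H assume "H \<in> Pow E"
      then have "0 \<le> V H" using Vnn by auto
      then show "0 \<le> pmf D H * V H" by simp
    qed
    finally show ?thesis unfolding a .
  qed
  finally have c: "(\<Sum>H\<in>Pow E. ennreal (pmf D H) * (\<Sum>e\<in>H. ennreal (w e * p e) * I e H))
      \<le> ennreal (alg1_value E p w D)" .
  have d: "(\<Sum>H\<in>Pow E. ennreal (pmf D H) * (\<Sum>e\<in>H. ennreal (w e * p e) * I e H))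
      = (\<Sum>e\<in>E. ennreal (w e * p e) * (\<Sum>H\<in>{H\<in>Pow E. e \<in> H}. ennreal (pmf D H) * I e H))"
  proof -
    have "(\<Sum>H\<in>Pow E. ennreal (pmf D H) * (\<Sum>e\<in>H. ennreal (w e * p e) * I e H))
        = (\<Sum>H\<in>Pow E. \<Sum>e\<in>E. if e \<in> H then ennreal (w e * p e) * (ennreal (pmf D H) * I e H) else 0)"
    proof (rule sum.cong[OF refl])
      fix H assume "H \<in> Pow E"
      then have "H = {e \<in> E. e \<in> H}" by auto
      then have "(\<Sum>e\<in>H. ennreal (w e * p e) * I e H) = (\<Sum>e\<in>{e \<in> E. e \<in> H}. ennreal (w e * p e) * I e H)"
        by simp
      also have "\<dots> = (\<Sum>e\<in>E. if e \<in> H then ennreal (w e * p e) * I e H else 0)"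
        using fin by (simp add: sum.inter_filter)
      finally show "ennreal (pmf D H) * (\<Sum>e\<in>H. ennreal (w e * p e) * I e H)
          = (\<Sum>e\<in>E. if e \<in> H then ennreal (w e * p e) * (ennreal (pmf D H) * I e H) else 0)"
        by (simp add: sum_distrib_left if_distrib mult.left_commute cong: if_cong)
    qed
    also have "\<dots> = (\<Sum>e\<in>E. \<Sum>H\<in>Pow E. if e \<in> H then ennreal (w e * p e) * (ennreal (pmf D H) * I e H) else 0)"
      by (rule sum.swap)
    also have "\<dots> = (\<Sum>e\<in>E. ennreal (w e * p e) * (\<Sum>H\<in>{H\<in>Pow E. e \<in> H}. ennreal (pmf D H) * I e H))"
      by (rule sum.cong[OF refl], subst sum.inter_filter[OF finPow]) (simp add: sum_distrib_left if_distrib cong: if_cong)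
    finally show ?thesis .
  qed
  have gnn0: "0 \<le> g (p e)" if "e \<in> E" for e
  proof -
    have "g 1 \<le> g (p e)" using g_mono[of "p e" 1] p that by auto
    then show "0 \<le> g (p e)" by (simp add: g_def)
  qed
  have e: "ennreal (x e * g (p e)) \<le> (\<Sum>H\<in>{H\<in>Pow E. e \<in> H}. ennreal (pmf D H) * I e H)" if eE: "e \<in> E" for e
  proof -
    let ?A = "{H\<in>Pow E. e \<in> H}"
    have finA: "finite ?A" using finPow by simp
    define B where "B = (\<Sum>f\<in>E - {e}. if adj e f then p f * x f else 0)"
    have B2: "B \<le> 2" unfolding B_def by (rule B_bound[OF fin lpf p])
    have sumA: "(\<Sum>H\<in>?A. pmf D H) = x e"
      using prob_sum[OF fin setD, of "\<lambda>H. e \<in> H"] marg[OF eE] by simp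
    have sumS: "(\<Sum>H\<in>?A. pmf D H * Sfun E p H e) \<le> x e * B"
    proof -
      have "(\<Sum>H\<in>?A. pmf D H * Sfun E p H e)
          = (\<Sum>H\<in>?A. \<Sum>f\<in>E - {e}. if f \<in> H \<and> adj e f then p f * pmf D H else 0)"
        unfolding Sfun_def by (simp add: sum_distrib_left if_distrib mult.commute cong: if_cong)
      also have "\<dots> = (\<Sum>f\<in>E - {e}. \<Sum>H\<in>?A. if f \<in> H \<and> adj e f then p f * pmf D H else 0)"
        by (rule sum.swap)
      also have "\<dots> = (\<Sum>f\<in>E - {e}. if adj e f then p f * measure_pmf.prob D {H. e \<in> H \<and> f \<in> H} else 0)"
      proof (rule sum.cong[OF refl])
        fix f assume "f \<in> E - {e}"
        have seq: "{H\<in>Pow E. e \<in> H \<and> f \<in> H} = {H\<in>?A. f \<in> H}" by auto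
        have "(\<Sum>H\<in>?A. if f \<in> H then pmf D H else 0) = (\<Sum>H\<in>{H\<in>Pow E. e \<in> H \<and> f \<in> H}. pmf D H)"
          unfolding seq by (rule sum.inter_filter[OF finA, symmetric])
        also have "\<dots> = measure_pmf.prob D {H. e \<in> H \<and> f \<in> H}"
          using prob_sum[OF fin setD, of "\<lambda>H. e \<in> H \<and> f \<in> H"] by simp
        finally have pr: "(\<Sum>H\<in>?A. if f \<in> H then pmf D H else 0) = measure_pmf.prob D {H. e \<in> H \<and> f \<in> H}" .
        show "(\<Sum>H\<in>?A. if f \<in> H \<and> adj e f then p f * pmf D H else 0)
            = (if adj e f then p f * measure_pmf.prob D {H. e \<in> H \<and> f \<in> H} else 0)"
        proof (cases "adj e f")
          case True
          have "(\<Sum>H\<in>?A. if f \<in> H \<and> adj e f then p f * pmf D H else 0)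
              = (\<Sum>H\<in>?A. p f * (if f \<in> H then pmf D H else 0))"
            using True by (intro sum.cong) auto
          also have "\<dots> = p f * (\<Sum>H\<in>?A. if f \<in> H then pmf D H else 0)"
            by (rule sum_distrib_left[symmetric])
          finally show ?thesis using True pr by simp
        qed simp
      qed
      also have "\<dots> \<le> (\<Sum>f\<in>E - {e}. if adj e f then p f * (x e * x f) else 0)"
      proof (rule sum_mono)
        fix f assume f: "f \<in> E - {e}"
        then have p0: "0 \<le> p f" using p by (auto intro: less_imp_le)
        show "(if adj e f then p f * measure_pmf.prob D {H. e \<in> H \<and> f \<in> H} else 0)
            \<le> (if adj e f then p f * (x e * x f) else 0)"
        proof (cases "adj e f")
          case True
          have "f \<in> E" using f by simp
          from mult_left_mono[OF pair_bound[OF gk eE this True] p0] True show ?thesis by simp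
        qed simp
      qed
      also have "\<dots> = x e * B"
        unfolding B_def by (simp add: sum_distrib_left if_distrib mult.left_commute cong: if_cong)
      finally show ?thesis .
    qed
    have "(\<Sum>H\<in>?A. ennreal (pmf D H) * I e H)
        = (\<integral>\<^sup>+ y. (\<Sum>H\<in>?A. ennreal (pmf D H) * ennreal (exp (- y * Sfun E p H e))) \<partial>Ydist (p e))"
    proof -
      have em: "(\<lambda>y. ennreal (exp (- y * c))) \<in> borel_measurable (Ydist q)" for c q
      proof (rule meas_Ydist, rule measurable_compose[OF _ measurable_ennreal])
        show "(\<lambda>y. exp (- y * c)) \<in> borel_measurable borel"
          by (intro borel_measurable_continuous_onI continuous_intros)
      qed
      have "(\<Sum>H\<in>?A. ennreal (pmf D H) * I e H)
          = (\<Sum>H\<in>?A. (\<integral>\<^sup>+ y. ennreal (pmf D H) * ennreal (exp (- y * Sfun E p H e)) \<partial>Ydist (p e)))"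
        unfolding I_def by (intro sum.cong refl nn_integral_cmult[symmetric] em)
      also have "\<dots> = (\<integral>\<^sup>+ y. (\<Sum>H\<in>?A. ennreal (pmf D H) * ennreal (exp (- y * Sfun E p H e))) \<partial>Ydist (p e))"
        by (rule nn_integral_sum[symmetric]) (intro borel_measurable_times_ennreal borel_measurable_const em)
      finally show ?thesis .
    qed
    also have "\<dots> \<ge> (\<integral>\<^sup>+ y. ennreal (x e) * ennreal (exp (- 2 * y)) \<partial>Ydist (p e))"
    proof (rule nn_integral_mono_AE)
      show "AE y in Ydist (p e). ennreal (x e) * ennreal (exp (- 2 * y))
          \<le> (\<Sum>H\<in>?A. ennreal (pmf D H) * ennreal (exp (- y * Sfun E p H e)))"
        using AE_Ydist
      proof (rule eventually_mono)
        fix y :: real assume y: "0 \<le> y"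
        have "x e * exp (- 2 * y) \<le> (\<Sum>H\<in>?A. pmf D H * exp (- y * Sfun E p H e))"
          by (rule jensen_pt[OF finA _ sumA sumS y B2]) simp
        then have "ennreal (x e * exp (- 2 * y)) \<le> ennreal (\<Sum>H\<in>?A. pmf D H * exp (- y * Sfun E p H e))"
          by (rule ennreal_leI)
        then show "ennreal (x e) * ennreal (exp (- 2 * y))
          \<le> (\<Sum>H\<in>?A. ennreal (pmf D H) * ennreal (exp (- y * Sfun E p H e)))"
        proof -
          have xe: "0 \<le> x e" using xnn eE by auto
          have l: "ennreal (x e) * ennreal (exp (- 2 * y)) = ennreal (x e * exp (- 2 * y))"
            by (rule ennreal_mult[OF xe, symmetric]) simp
          have r1: "(\<Sum>H\<in>?A. ennreal (pmf D H) * ennreal (exp (- y * Sfun E p H e)))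
              = (\<Sum>H\<in>?A. ennreal (pmf D H * exp (- y * Sfun E p H e)))"
            by (rule sum.cong[OF refl], rule ennreal_mult[OF pmf_nonneg, symmetric]) simp
          have r2: "(\<Sum>H\<in>?A. ennreal (pmf D H * exp (- y * Sfun E p H e)))
              = ennreal (\<Sum>H\<in>?A. pmf D H * exp (- y * Sfun E p H e))"
            by (rule sum_ennreal) simp
          show ?thesis unfolding l r1 r2 by fact
        qed
      qed
    qed
    also have "(\<integral>\<^sup>+ y. ennreal (x e) * ennreal (exp (- 2 * y)) \<partial>Ydist (p e))
        = ennreal (x e) * ennreal (g (p e))"
    proof -
      have "(\<integral>\<^sup>+ y. ennreal (x e) * ennreal (exp (- 2 * y)) \<partial>Ydist (p e))
          = ennreal (x e) * (\<integral>\<^sup>+ y. ennreal (exp (- 2 * y)) \<partial>Ydist (p e))"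
        by (rule nn_integral_cmult) (auto intro!: meas_Ydist)
      also have "(\<integral>\<^sup>+ y. ennreal (exp (- 2 * y)) \<partial>Ydist (p e))
          = (\<integral>\<^sup>+ y. ennreal (indicator (Aset (p e)) y * exp (- p e * y)) * ennreal (exp (- 2 * y)) \<partial>lborel)"
        unfolding Ydist_alt by (subst nn_integral_density) auto
      also have "\<dots> = ennreal (g (p e))"
        using Ydist_g p eE by auto
      finally show ?thesis by simp
    qed
    finally show ?thesis
      using ennreal_mult[of "x e" "g (p e)"] xnn eE gnn0[OF eE] by simp
  qed
  have wp0: "0 \<le> w e * p e" if "e \<in> E" for e
  proof -
    from that p w have "0 \<le> w e" "0 < p e" by auto
    then show ?thesis by simp
  qed
  have xg0: "0 \<le> x e * g (p e)" if "e \<in> E" for e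
    using xnn that gnn0[OF that] by simp
  have wpx: "\<forall>e\<in>E. 0 \<le> w e * p e * x e"
    using wp0 xnn by simp
  have all0: "0 \<le> w e * p e * x e * g (p e)" if "e \<in> E" for e
    using mult_nonneg_nonneg[OF wp0[OF that] xg0[OF that]] by (simp add: mult.assoc)
  have "ennreal (\<Sum>e\<in>E. w e * p e * x e * g (p e))
      = (\<Sum>e\<in>E. ennreal (w e * p e * x e * g (p e)))"
    by (rule sum_ennreal[symmetric]) (rule all0)
  also have "\<dots> = (\<Sum>e\<in>E. ennreal (w e * p e) * ennreal (x e * g (p e)))"
  proof (rule sum.cong[OF refl])
    fix e assume eE: "e \<in> E"
    have "ennreal ((w e * p e) * (x e * g (p e))) = ennreal (w e * p e) * ennreal (x e * g (p e))"
      by (rule ennreal_mult[OF wp0[OF eE] xg0[OF eE]])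
    then show "ennreal (w e * p e * x e * g (p e)) = ennreal (w e * p e) * ennreal (x e * g (p e))"
      by (simp only: mult.assoc)
  qed
  also have "\<dots> \<le> (\<Sum>e\<in>E. ennreal (w e * p e) * (\<Sum>H\<in>{H\<in>Pow E. e \<in> H}. ennreal (pmf D H) * I e H))"
    by (rule sum_mono, rule mult_left_mono[OF e]) auto
  also have "\<dots> \<le> ennreal (alg1_value E p w D)" using c unfolding d .
  finally have fin_ineq: "ennreal (\<Sum>e\<in>E. w e * p e * x e * g (p e)) \<le> ennreal (alg1_value E p w D)" .
  have A0: "0 \<le> alg1_value E p w D"
    unfolding a by (rule sum_nonneg) (use Vnn in auto)
  have "(\<Sum>e\<in>E. w e * p e * x e * g (p e)) \<le> alg1_value E p w D"
    using fin_ineq ennreal_le_iff[OF A0] by blast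
  moreover have "(\<gamma> / 3 + g \<delta> * (1 - \<gamma>)) * lp_obj E p w x \<le> (\<Sum>e\<in>E. w e * p e * x e * g (p e))"
    unfolding lp_obj_def
    by (rule final_real[OF fin p wpx assms(8,9)]) (use assms(12) in \<open>simp add: lp_obj_def\<close>)
  ultimately show ?thesis by linarith
qed

end
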